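(* Let $m$ be a positive integer with $\omega(m)\ge 2$. Then the $n$-ary functions $\mathrm{AND}_n$ can be realized by probabilistic $\mathrm{CC}^2[m]$-circuits of size polynomial in $n$ using $O(\log n)$ random bits. In fact, for two different primes $p,q$, this realization can be done by $\mathrm{CC}[p;q]$-circuits.
   Context: For an integer $m\ge 1$ and $A\subseteq\{0,\dots,m-1\}$, a gate $\mathrm{MOD}_m^A$ takes finitely many Boolean inputs (counted with multiplicity) and outputs $1$ if their sum modulo $m$ lies in $A$, and $0$ otherwise. A $\mathrm{CC}^h[m]$-circuit is a depth-$h$ Boolean circuit all of whose gates are of the form $\mathrm{MOD}_m^A$ ($A$ may vary between gates), multiple wires allowed. A $\mathrm{CC}[p;q]$-circuit is a depth-2 circuit whose gates on the first level (fed by the inputs) are of the form $\mathrm{MOD}_p^A$ and whose output gate on the second level is of the form $\mathrm{MOD}_q^A$. The size of a circuit is its number of gates. $\omega(m)$ is the number of distinct prime divisors of $m$. A probabilistic circuit realizing an $n$-ary Boolean function $f$ with $r$ random bits is a circuit $\Gamma$ with $n+r$ inputs such that for every $\bar a\in\{0,1\}^n$, for at least $\frac23$ of the tuples $\bar b\in\{0,1\}^r$ we have $\Gamma(\bar a,\bar b)=f(\bar a)$. *)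

theory Defs
  imports Complex_Main "HOL-Computational_Algebra.Primes"
begin

definition omega :: "nat \<Rightarrow> nat" where
  "omega m = card (prime_factors m)"

(* A MOD gate reading a Boolean vector xs (inputs counted with multiplicity
   w i for the i-th coordinate): outputs 1 iff (sum of inputs) mod m lies in A. *)
definition mod_gate :: "nat \<Rightarrow> (nat \<Rightarrow> nat) \<Rightarrow> nat set \<Rightarrow> bool list \<Rightarrow> bool" where
  "mod_gate m w A xs = ((\<Sum>i<length xs. w i * (if xs ! i then 1 else 0)) mod m \<in> A)"

(* A depth-2 circuit: a list of first-level gates (wire multiplicities from the
   circuit inputs, accepting set) and an output gate given by wire multiplicities
   from the circuit inputs, wire multiplicities from the first-level gates, and
   an accepting set. *)
datatype circ2 = Circ2
  (level1: "((nat \<Rightarrow> nat) \<times> nat set) list")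
  (out_in: "nat \<Rightarrow> nat")
  (out_gates: "nat \<Rightarrow> nat")
  (out_acc: "nat set")

definition eval_circ2 :: "nat \<Rightarrow> nat \<Rightarrow> circ2 \<Rightarrow> bool list \<Rightarrow> bool" where
  "eval_circ2 p q C xs =
     (let g = map (\<lambda>(w, A). mod_gate p w A xs) (level1 C)
      in ((\<Sum>i<length xs. out_in C i * (if xs ! i then 1 else 0))
          + (\<Sum>j<length g. out_gates C j * (if g ! j then 1 else 0))) mod q \<in> out_acc C)"

definition size_circ2 :: "circ2 \<Rightarrow> nat" where
  "size_circ2 C = length (level1 C) + 1"

definition eval_CC2 :: "nat \<Rightarrow> circ2 \<Rightarrow> bool list \<Rightarrow> bool" where
  "eval_CC2 m C xs = eval_circ2 m m C xs"

(* CC[p;q]-circuit: first level MOD_p gates fed by inputs only, output MOD_q gate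
   fed by first-level gates only. *)
definition is_CCpq :: "nat \<Rightarrow> circ2 \<Rightarrow> bool" where
  "is_CCpq N C = (\<forall>i<N. out_in C i = 0)"

definition AND_fun :: "bool list \<Rightarrow> bool" where
  "AND_fun a = (\<forall>i<length a. a ! i)"

definition prob_realizes ::
  "(bool list \<Rightarrow> bool) \<Rightarrow> nat \<Rightarrow> nat \<Rightarrow> (bool list \<Rightarrow> bool) \<Rightarrow> bool" where
  "prob_realizes Gamma n r f =
     (\<forall>a. length a = n \<longrightarrow>
        3 * card {b. length b = r \<and> Gamma (a @ b) = f a} \<ge> 2 * 2 ^ r)"

end

theory Submission
  imports Defs "HOL-Library.FuncSet" "HOL-Number_Theory.Cong"
begin



definition zv :: "bool list \<Rightarrow> nat \<Rightarrow> nat" where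
  "zv a i = (if a ! i then 0 else 1)"

definition dotz :: "nat \<Rightarrow> (nat \<Rightarrow> nat) \<Rightarrow> bool list \<Rightarrow> nat" where
  "dotz n v a = (\<Sum>i<n. v i * zv a i)"

lemma W_half:
  fixes p n i0 :: nat and a :: "bool list"
  assumes p: "p \<ge> 2" and i0: "i0 < n" "\<not> a ! i0"
  defines "V \<equiv> PiE {..<n} (\<lambda>_. {..<p})"
  defines "W \<equiv> {v \<in> V. dotz n v a mod p = 0}"
  shows "2 * card W \<le> card V"
proof -
  define \<phi> where "\<phi> v = v(i0 := Suc (v i0) mod p)" for v :: "nat \<Rightarrow> nat"
  have finV: "finite V" unfolding V_def by (simp add: finite_PiE)
  have WV: "W \<subseteq> V" unfolding W_def by auto
  have phiV: "\<phi> v \<in> V" if "v \<in> V" for v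
    using that i0 p unfolding V_def \<phi>_def by (auto simp: PiE_iff extensional_def)
  have inj: "inj_on \<phi> V"
  proof (rule inj_onI)
    fix v w assume v: "v \<in> V" and w: "w \<in> V" and e: "\<phi> v = \<phi> w"
    have "Suc (v i0) mod p = Suc (w i0) mod p"
      using e unfolding \<phi>_def by (metis fun_upd_same)
    hence "[v i0 + 1 = w i0 + 1] (mod p)" by (simp add: cong_def)
    hence "[v i0 = w i0] (mod p)" by (simp only: cong_add_rcancel_nat)
    moreover have "v i0 < p" "w i0 < p" using v w i0 unfolding V_def by auto
    ultimately have "v i0 = w i0" by (simp add: cong_def)
    thus "v = w" using e unfolding \<phi>_def by (metis fun_upd_triv fun_upd_upd)
  qed
  have dot: "dotz n (\<phi> v) a mod p \<noteq> 0" if "v \<in> W" for v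
  proof -
    have s: "dotz n u a = u i0 * zv a i0 + (\<Sum>i\<in>{..<n}-{i0}. u i * zv a i)" for u
      unfolding dotz_def using i0 by (simp add: sum.remove)
    have "(\<Sum>i\<in>{..<n}-{i0}. \<phi> v i * zv a i) = (\<Sum>i\<in>{..<n}-{i0}. v i * zv a i)"
      by (rule sum.cong) (auto simp: \<phi>_def)
    hence "dotz n (\<phi> v) a = Suc (v i0) mod p + (\<Sum>i\<in>{..<n}-{i0}. v i * zv a i)"
      "dotz n v a = v i0 + (\<Sum>i\<in>{..<n}-{i0}. v i * zv a i)"
      using s[of "\<phi> v"] s[of v] i0 by (auto simp: \<phi>_def zv_def)
    hence "dotz n (\<phi> v) a mod p = Suc (dotz n v a) mod p"
      by (simp add: mod_add_left_eq)
    also have "\<dots> = Suc (dotz n v a mod p) mod p" by (simp add: mod_Suc_eq)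
    also have "\<dots> = 1 mod p" using that W_def by simp
    finally have "dotz n (\<phi> v) a mod p = 1 mod p" .
    thus ?thesis using p by simp
  qed
  have "\<phi> ` W \<subseteq> V - W" proof (rule subsetI) fix y assume "y \<in> \<phi> ` W" then obtain v where v: "v \<in> W" "y = \<phi> v" by auto show "y \<in> V - W" using dot[OF v(1)] phiV[of v] v WV W_def by auto qed
  hence "card (\<phi> ` W) \<le> card (V - W)" using finV by (intro card_mono) auto
  moreover have "card (\<phi> ` W) = card W" using inj WV by (meson card_image inj_on_subset)
  moreover have "card (V - W) = card V - card W" using WV finV by (simp add: card_Diff_subset finite_subset)
  moreover have "card W \<le> card V" using WV finV by (simp add: card_mono)
  ultimately show ?thesis by linarith
qed


lemma card_bool_lists: "card {\<rho>::bool list. length \<rho> = r} = 2^r"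
  using card_lists_length_eq[of "UNIV::bool set" r] by simp

lemma finite_bool_lists: "finite {\<rho>::bool list. length \<rho> = r}"
  using finite_lists_length_eq[of "UNIV::bool set" r] by simp

lemma aux3: "n \<le> (M::nat) \<Longrightarrow> n + M < (M div 3 + 1) * 6" by presburger

lemma family_exists:
  fixes p n r d :: nat
  assumes p: "p \<ge> 2" and N: "n \<le> 2^r" and d: "d = 6"
  shows "\<exists>F. \<forall>a. length a = n \<and> \<not>(\<forall>i<n. a!i) \<longrightarrow>
     3 * card {\<rho>::bool list. length \<rho> = r \<and> (\<forall>l<d. dotz n (F (\<rho>,l)) a mod p = 0)} \<le> 2^r"
proof -
  define Seeds where "Seeds = {\<rho>::bool list. length \<rho> = r}"
  define I where "I = Seeds \<times> {..<d}"
  define V where "V = PiE {..<n} (\<lambda>_. {..<p})"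
  define Fam where "Fam = PiE I (\<lambda>_. V)"
  define k :: nat where "k = 2^r div 3 + 1"
  define As where "As = {a::bool list. length a = n \<and> \<not>(\<forall>i<n. a!i)}"
  define Ts where "Ts = {T. T \<subseteq> Seeds \<and> card T = k}"
  define W where "W a = {v\<in>V. dotz n v a mod p = 0}" for a
  define B where "B a T = PiE I (\<lambda>j. if j \<in> T \<times> {..<d} then W a else V)" for a T
  define Bad where "Bad = {F \<in> Fam. \<exists>a\<in>As. \<exists>T\<in>Ts. \<forall>j\<in>T\<times>{..<d}. F j \<in> W a}"
  have finSeeds: "finite Seeds" unfolding Seeds_def by (rule finite_bool_lists)
  have cardSeeds: "card Seeds = 2^r" unfolding Seeds_def by (rule card_bool_lists)
  have finI: "finite I" unfolding I_def using finSeeds by simp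
  have finV: "finite V" unfolding V_def by (simp add: finite_PiE)
  have finFam: "finite Fam" unfolding Fam_def using finI finV by (simp add: finite_PiE)
  have finAs: "finite As" unfolding As_def
    by (rule finite_subset[OF _ finite_bool_lists[of n]]) auto
  have cardAs: "card As \<le> 2^n" unfolding As_def
    using card_mono[OF finite_bool_lists[of n], of "{a::bool list. length a = n \<and> \<not>(\<forall>i<n. a!i)}"]
      card_bool_lists[of n] by auto
  have finTs: "finite Ts" unfolding Ts_def
    by (rule finite_subset[of _ "Pow Seeds"]) (use finSeeds in auto)
  have cardTs: "card Ts \<le> 2^(2^r)"
  proof -
    have "card Ts \<le> card (Pow Seeds)" unfolding Ts_def
      by (rule card_mono) (use finSeeds in auto)
    thus ?thesis using cardSeeds finSeeds by (simp add: card_Pow)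
  qed
  have VW: "W a \<subseteq> V" for a unfolding W_def by auto
  have Wc: "2 * card (W a) \<le> card V" if "a \<in> As" for a
  proof -
    from that obtain i0 where "i0 < n" "\<not> a ! i0" unfolding As_def by auto
    thus ?thesis using W_half[OF p, of i0 n a] unfolding W_def V_def by simp
  qed
  have Bc: "2^(k*d) * card (B a T) \<le> card Fam" if "a \<in> As" "T \<in> Ts" for a T
  proof -
    have TS: "T \<subseteq> Seeds" "card T = k" using that unfolding Ts_def by auto
    define J where "J = T \<times> {..<d}"
    have JI: "J \<subseteq> I" unfolding J_def I_def using TS by auto
    have cJ: "card J = k * d" unfolding J_def using TS by (simp add: card_cartesian_product)
    have "card (B a T) = (\<Prod>j\<in>I. card (if j \<in> J then W a else V))"
      unfolding B_def J_def using finI by (simp add: card_PiE)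
    moreover have "(\<Prod>j\<in>I. (if j \<in> J then 2 else 1::nat)) = 2^(k*d)"
    proof -
      have "(\<Prod>j\<in>I. (if j \<in> J then 2 else 1::nat)) = (\<Prod>j\<in>J. 2)"
        using finI JI by (simp add: prod.If_cases Int_absorb1)
      thus ?thesis using cJ by simp
    qed
    moreover have "(\<Prod>j\<in>I. (if j \<in> J then 2 else 1::nat) * card (if j \<in> J then W a else V))
        \<le> (\<Prod>j\<in>I. card V)"
      by (rule prod_mono) (use Wc[OF that(1)] in auto)
    moreover have "card Fam = (\<Prod>j\<in>I. card V)" unfolding Fam_def using finI by (simp add: card_PiE)
    ultimately show ?thesis by (simp add: prod.distrib)
  qed
  have BadSub: "Bad \<subseteq> (\<Union>a\<in>As. \<Union>T\<in>Ts. B a T)"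
  proof
    fix F assume "F \<in> Bad"
    then obtain a T where aT: "a \<in> As" "T \<in> Ts" "\<forall>j\<in>T\<times>{..<d}. F j \<in> W a" "F \<in> Fam"
      unfolding Bad_def by auto
    have "F \<in> B a T" unfolding B_def using aT(3,4) VW unfolding Fam_def by (auto simp: PiE_iff)
    thus "F \<in> (\<Union>a\<in>As. \<Union>T\<in>Ts. B a T)" using aT by auto
  qed
  have "card Bad \<le> (\<Sum>a\<in>As. \<Sum>T\<in>Ts. card (B a T))"
  proof -
    have "card Bad \<le> card (\<Union>a\<in>As. \<Union>T\<in>Ts. B a T)"
      by (rule card_mono[OF _ BadSub]) (use finAs finTs finI finV VW finite_subset[OF VW finV] in \<open>auto simp: B_def intro!: finite_PiE\<close>)
    also have "\<dots> \<le> (\<Sum>a\<in>As. card (\<Union>T\<in>Ts. B a T))" by (rule card_UN_le[OF finAs])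
    also have "\<dots> \<le> (\<Sum>a\<in>As. \<Sum>T\<in>Ts. card (B a T))"
      by (rule sum_mono, rule card_UN_le[OF finTs])
    finally show ?thesis .
  qed
  hence "2^(k*d) * card Bad \<le> (\<Sum>a\<in>As. \<Sum>T\<in>Ts. 2^(k*d) * card (B a T))"
    by (simp add: sum_distrib_left[symmetric])
  also have "\<dots> \<le> (\<Sum>a\<in>As. \<Sum>T\<in>Ts. card Fam)"
    by (intro sum_mono Bc)
  also have "\<dots> = card As * card Ts * card Fam" by simp
  also have "\<dots> \<le> 2^n * 2^(2^r) * card Fam"
    using cardAs cardTs by (intro mult_right_mono mult_mono) auto
  finally have b1: "2^(k*d) * card Bad \<le> 2^(n + 2^r) * card Fam" by (simp add: power_add)
  have Vne: "V \<noteq> {}" unfolding V_def using p by (auto simp: PiE_eq_empty_iff lessThan_empty_iff)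
  have "Fam \<noteq> {}" unfolding Fam_def using Vne by (auto simp: PiE_eq_empty_iff)
  hence Fpos: "card Fam > 0" using finFam by (simp add: card_gt_0_iff)
  have "n + 2^r < k * d" unfolding k_def d using aux3[OF N] .
  hence "2^(n + 2^r) < (2::nat)^(k*d)" by (rule power_strict_increasing) simp
  hence "2^(n + 2^r) * card Fam < 2^(k*d) * card Fam" using Fpos by (rule mult_strict_right_mono)
  with b1 have "2^(k*d) * card Bad < 2^(k*d) * card Fam" by linarith
  hence "card Bad < card Fam" by simp
  moreover have "Bad \<subseteq> Fam" unfolding Bad_def by auto
  ultimately have "\<not> Fam \<subseteq> Bad" using card_mono[of Bad Fam] finFam finite_subset by (metis card_mono not_le)
  then obtain F where F: "F \<in> Fam" "F \<notin> Bad" by blast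
  have "\<forall>a. length a = n \<and> \<not>(\<forall>i<n. a!i) \<longrightarrow>
     3 * card {\<rho>::bool list. length \<rho> = r \<and> (\<forall>l<d. dotz n (F (\<rho>,l)) a mod p = 0)} \<le> 2^r"
  proof (intro allI impI)
    fix a :: "bool list" assume a: "length a = n \<and> \<not> (\<forall>i<n. a ! i)"
    define S where "S = {\<rho>. length \<rho> = r \<and> (\<forall>l<d. dotz n (F (\<rho>,l)) a mod p = 0)}"
    show "3 * card S \<le> 2^r"
    proof (rule ccontr)
      assume "\<not> 3 * card S \<le> 2^r"
      hence "k \<le> card S" unfolding k_def by linarith
      then obtain T where T: "T \<subseteq> S" "card T = k" by (meson obtain_subset_with_card_n)
      have "T \<in> Ts" using T unfolding Ts_def S_def Seeds_def by auto
      moreover have "a \<in> As" using a unfolding As_def by auto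
      moreover have "\<forall>j\<in>T\<times>{..<d}. F j \<in> W a"
        using T F(1) unfolding S_def W_def Fam_def I_def Seeds_def by (auto simp: PiE_iff)
      ultimately have "F \<in> Bad" using F(1) unfolding Bad_def by blast
      with F(2) show False by simp
    qed
  qed
  thus ?thesis by blast
qed



lemma unique_u:
  fixes p g0 x c :: nat
  assumes p: "prime p" and g: "g0 mod p \<noteq> 0" and c: "c < p"
  shows "card {u. u < p \<and> (x + u * g0) mod p = c} = 1"
proof -
  define f where "f u = (x + u * g0) mod p" for u
  have cop: "coprime g0 p" using p g prime_imp_coprime[of p g0]
    by (simp add: coprime_commute dvd_eq_mod_eq_0)
  have inj: "inj_on f {..<p}"
  proof (rule inj_onI)
    fix u v assume uv: "u \<in> {..<p}" "v \<in> {..<p}" "f u = f v"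
    have "[x + u * g0 = x + v * g0] (mod p)" using uv(3) unfolding f_def cong_def by simp
    hence "[u * g0 = v * g0] (mod p)" by (simp only: cong_add_lcancel_nat)
    hence "[u = v] (mod p)" using cong_mult_rcancel_nat[OF cop] by blast
    thus "u = v" using uv by (auto intro: cong_less_modulus_unique_nat)
  qed
  have pp: "p > 0" using p prime_gt_0_nat by blast
  have im: "f ` {..<p} = {..<p}"
  proof (rule card_subset_eq)
    show "f ` {..<p} \<subseteq> {..<p}" unfolding f_def using pp by auto
    show "card (f ` {..<p}) = card {..<p}" using inj by (simp add: card_image)
  qed simp
  then obtain u0 where u0: "u0 < p" "f u0 = c" using c by (metis imageE lessThan_iff)
  have "{u. u < p \<and> (x + u * g0) mod p = c} = {u0}"
  proof (intro set_eqI iffI)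
    fix u assume "u \<in> {u. u < p \<and> (x + u * g0) mod p = c}"
    hence "u < p" "f u = f u0" using u0 unfolding f_def by auto
    thus "u \<in> {u0}" using inj u0 by (auto dest: inj_onD)
  next
    fix u assume "u \<in> {u0}" thus "u \<in> {u. u < p \<and> (x + u * g0) mod p = c}" using u0 f_def by auto
  qed
  thus ?thesis by simp
qed

definition Uset :: "nat \<Rightarrow> nat \<Rightarrow> nat set \<Rightarrow> nat list set" where
  "Uset p R X = {U. length U = R \<and> set U \<subseteq> {..<p}}"

lemma finite_Uset: "finite {U::nat list. length U = R \<and> set U \<subseteq> {..<p}}"
  using finite_lists_length_eq[of "{..<p}" R] by (simp add: conj_commute)

lemma count_U:
  fixes p :: nat
  assumes p: "prime p" and c: "c < p"
  shows "card {U. length U = R \<and> set U \<subseteq> {..<p} \<and> (x + (\<Sum>j<R. U!j * g j)) mod p = c}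
     = (if \<exists>j<R. g j mod p \<noteq> 0 then p^(R-1) else if x mod p = c then p^R else 0)"
proof (induction R arbitrary: g x)
  case 0
  have "{U::nat list. length U = 0 \<and> set U \<subseteq> {..<p} \<and> (x + (\<Sum>j<0. U!j * g j)) mod p = c}
     = (if x mod p = c then {[]} else {})" by auto
  thus ?case by simp
next
  case (Suc R)
  define S where "S g' x' = {U. length U = R \<and> set U \<subseteq> {..<p} \<and> (x' + (\<Sum>j<R. U!j * g' j)) mod p = c}" for g' x'
  define g' where "g' j = g (Suc j)" for j
  have eq: "{U. length U = Suc R \<and> set U \<subseteq> {..<p} \<and> (x + (\<Sum>j<Suc R. U!j * g j)) mod p = c}
     = (\<Union>u\<in>{..<p}. (\<lambda>U. u # U) ` S g' (x + u * g 0))"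
  proof (intro set_eqI iffI)
    fix U assume "U \<in> {U. length U = Suc R \<and> set U \<subseteq> {..<p} \<and> (x + (\<Sum>j<Suc R. U!j * g j)) mod p = c}"
    then obtain u U' where U: "U = u # U'" "length U' = R" "u < p" "set U' \<subseteq> {..<p}"
      "(x + (\<Sum>j<Suc R. U!j * g j)) mod p = c" by (cases U) auto
    have "(\<Sum>j<Suc R. U!j * g j) = u * g 0 + (\<Sum>j<R. U'!j * g' j)"
      unfolding U(1) g'_def by (simp add: sum.lessThan_Suc_shift del: sum.lessThan_Suc)
    hence "U' \<in> S g' (x + u * g 0)" using U unfolding S_def by (simp add: add.assoc)
    thus "U \<in> (\<Union>u\<in>{..<p}. (\<lambda>U. u # U) ` S g' (x + u * g 0))" using U by auto
  next
    fix U assume "U \<in> (\<Union>u\<in>{..<p}. (\<lambda>U. u # U) ` S g' (x + u * g 0))"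
    then obtain u U' where U: "U = u # U'" "u < p" "U' \<in> S g' (x + u * g 0)" by auto
    have "(\<Sum>j<Suc R. U!j * g j) = u * g 0 + (\<Sum>j<R. U'!j * g' j)"
      unfolding U(1) g'_def by (simp add: sum.lessThan_Suc_shift del: sum.lessThan_Suc)
    thus "U \<in> {U. length U = Suc R \<and> set U \<subseteq> {..<p} \<and> (x + (\<Sum>j<Suc R. U!j * g j)) mod p = c}"
      using U unfolding S_def by (auto simp: add.assoc)
  qed
  have finS: "finite (S g'' x')" for g'' x' unfolding S_def
    by (rule finite_subset[OF _ finite_Uset[of R p]]) auto
  have "card (\<Union>u\<in>{..<p}. (\<lambda>U. u # U) ` S g' (x + u * g 0)) = (\<Sum>u<p. card ((\<lambda>U. u # U) ` S g' (x + u * g 0)))"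
    by (rule card_UN_disjoint) (use finS in auto)
  also have "\<dots> = (\<Sum>u<p. card (S g' (x + u * g 0)))"
    by (rule sum.cong) (auto simp: card_image)
  finally have cardeq: "card {U. length U = Suc R \<and> set U \<subseteq> {..<p} \<and> (x + (\<Sum>j<Suc R. U!j * g j)) mod p = c}
      = (\<Sum>u<p. card (S g' (x + u * g 0)))" using eq by simp
  have IH: "card (S g' x') = (if \<exists>j<R. g' j mod p \<noteq> 0 then p^(R-1) else if x' mod p = c then p^R else 0)" for x'
    unfolding S_def by (rule Suc.IH)
  show ?case
  proof (cases "\<exists>j<R. g' j mod p \<noteq> 0")
    case True
    then obtain j where "j < R" by blast
    hence "p * p^(R-1) = p^R" by (metis Suc_pred' gr_zeroI not_less0 power_Suc)
    moreover have "\<exists>j<Suc R. g j mod p \<noteq> 0" using True unfolding g'_def by auto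
    ultimately show ?thesis unfolding cardeq IH using True by simp
  next
    case False
    hence F: "\<forall>j<R. g (Suc j) mod p = 0" unfolding g'_def by auto
    show ?thesis
    proof (cases "g 0 mod p = 0")
      case True
      have nex: "\<not> (\<exists>j<Suc R. g j mod p \<noteq> 0)" using True F by (metis less_Suc_eq_0_disj)
      have md: "(x + u * g 0) mod p = x mod p" for u
        using True by (metis add_0_right mod_add_right_eq mod_mult_right_eq mult_0_right)
      have each: "card (S g' (x + u * g 0)) = (if x mod p = c then p^R else 0)" for u
        using IH[of "x + u * g 0"] False md[of u] by (metis (no_types))
      show ?thesis unfolding cardeq each if_not_P[OF nex] by simp
    next
      case g0: False
      have ex: "\<exists>j<Suc R. g j mod p \<noteq> 0" using g0 by blast
      have "(\<Sum>u<p. card (S g' (x + u * g 0))) = (\<Sum>u<p. if (x + u * g 0) mod p = c then p^R else 0)"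
        unfolding IH if_not_P[OF False] by simp
      also have "\<dots> = p^R * card {u. u < p \<and> (x + u * g 0) mod p = c}"
        by (simp add: sum.If_cases lessThan_def Collect_conj_eq Int_commute)
      also have "\<dots> = p^R" using unique_u[OF p g0 c] by simp
      finally show ?thesis unfolding cardeq using ex by simp
    qed
  qed
qed



lemma sum_split_add: "(\<Sum>i<n+r. f i) = (\<Sum>i<n. f i) + (\<Sum>j<r. f (n+j::nat))"
  by (induction r) (auto simp: add.assoc)

definition gw :: "nat \<Rightarrow> nat \<Rightarrow> nat \<Rightarrow> nat \<Rightarrow> (bool list \<Rightarrow> nat \<Rightarrow> nat \<Rightarrow> nat) \<Rightarrow> bool list \<Rightarrow> nat list \<Rightarrow> nat \<Rightarrow> nat" where
  "gw p n r d v \<rho> U i = (if i < n then (p-1) * (\<Sum>l<d. U!(r+l) * v \<rho> l i)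
     else if i < n + r then U!(i-n) * (if \<rho>!(i-n) then p-1 else 1) else 0)"

definition gC :: "nat \<Rightarrow> nat \<Rightarrow> nat \<Rightarrow> (bool list \<Rightarrow> nat \<Rightarrow> nat \<Rightarrow> nat) \<Rightarrow> bool list \<Rightarrow> nat list \<Rightarrow> nat" where
  "gC n r d v \<rho> U = (\<Sum>j<r. U!j * (if \<rho>!j then 1 else 0)) + (\<Sum>l<d. U!(r+l) * (\<Sum>i<n. v \<rho> l i))"

definition gvec :: "nat \<Rightarrow> nat \<Rightarrow> (bool list \<Rightarrow> nat \<Rightarrow> nat \<Rightarrow> nat) \<Rightarrow> bool list \<Rightarrow> bool list \<Rightarrow> bool list \<Rightarrow> nat \<Rightarrow> nat" where
  "gvec n r v \<rho> a b j = (if j < r then (if b!j = \<rho>!j then 0 else 1) else dotz n (v \<rho> (j-r)) a)"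

lemma gate_cong:
  fixes p :: nat
  assumes p: "p \<ge> 1" and la: "length a = n" and lb: "length b = r"
  shows "[(\<Sum>i<length (a@b). gw p n r d v \<rho> U i * (if (a@b)!i then 1 else 0)) + gC n r d v \<rho> U
          = (\<Sum>j<r+d. U!j * gvec n r v \<rho> a b j)] (mod p)"
proof -
  define ba where "ba i = (if a!i then 1 else 0::nat)" for i
  define bb where "bb j = (if b!j then 1 else 0::nat)" for j
  define cc where "cc j = (if \<rho>!j then p-1 else 1::nat)" for j
  have S1: "(\<Sum>i<n. gw p n r d v \<rho> U i * (if (a@b)!i then 1 else 0)) = (\<Sum>i<n. (p-1) * (\<Sum>l<d. U!(r+l) * v \<rho> l i) * ba i)"
    by (rule sum.cong) (auto simp: gw_def ba_def nth_append la)
  have S2: "(\<Sum>j<r. gw p n r d v \<rho> U (n+j) * (if (a@b)!(n+j) then 1 else 0)) = (\<Sum>j<r. U!j * cc j * bb j)"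
    by (rule sum.cong) (auto simp: gw_def cc_def bb_def nth_append la)
  have S: "(\<Sum>i<length (a@b). gw p n r d v \<rho> U i * (if (a@b)!i then 1 else 0))
     = (\<Sum>i<n. (p-1) * (\<Sum>l<d. U!(r+l) * v \<rho> l i) * ba i) + (\<Sum>j<r. U!j * cc j * bb j)"
    unfolding length_append la lb sum_split_add[where n=n and r=r] S1 S2 ..
  have A: "(\<Sum>i<n. (p-1) * (\<Sum>l<d. U!(r+l) * v \<rho> l i) * ba i) + (\<Sum>l<d. U!(r+l) * (\<Sum>i<n. v \<rho> l i))
      = (\<Sum>l<d. U!(r+l) * (\<Sum>i<n. v \<rho> l i * ((p-1) * ba i + 1)))"
  proof -
    have "(\<Sum>l<d. U!(r+l) * (\<Sum>i<n. v \<rho> l i * ((p-1) * ba i + 1)))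
       = (\<Sum>l<d. \<Sum>i<n. U!(r+l) * v \<rho> l i * (p-1) * ba i) + (\<Sum>l<d. U!(r+l) * (\<Sum>i<n. v \<rho> l i))"
      by (simp add: sum_distrib_left algebra_simps sum.distrib)
    also have "(\<Sum>l<d. \<Sum>i<n. U!(r+l) * v \<rho> l i * (p-1) * ba i) = (\<Sum>i<n. \<Sum>l<d. U!(r+l) * v \<rho> l i * (p-1) * ba i)"
      by (rule sum.swap)
    also have "\<dots> = (\<Sum>i<n. (p-1) * (\<Sum>l<d. U!(r+l) * v \<rho> l i) * ba i)"
      by (simp add: sum_distrib_left sum_distrib_right algebra_simps)
    finally show ?thesis by simp
  qed
  have B: "(\<Sum>j<r. U!j * cc j * bb j) + (\<Sum>j<r. U!j * (if \<rho>!j then 1 else 0))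
      = (\<Sum>j<r. U!j * (cc j * bb j + (if \<rho>!j then 1 else 0)))"
    by (simp add: sum.distrib algebra_simps)
  have T: "(\<Sum>j<r+d. U!j * gvec n r v \<rho> a b j)
     = (\<Sum>j<r. U!j * (if b!j = \<rho>!j then 0 else 1)) + (\<Sum>l<d. U!(r+l) * dotz n (v \<rho> l) a)"
    unfolding sum_split_add[where n=r and r=d] by (simp add: gvec_def)
  have c1: "[(\<Sum>j<r. U!j * (cc j * bb j + (if \<rho>!j then 1 else 0))) = (\<Sum>j<r. U!j * (if b!j = \<rho>!j then 0 else 1))] (mod p)"
  proof (rule cong_sum, rule cong_mult, rule cong_refl)
    fix j
    show "[cc j * bb j + (if \<rho>!j then 1 else 0) = (if b!j = \<rho>!j then 0 else 1)] (mod p)"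
      using p unfolding cc_def bb_def by (cases "b!j"; cases "\<rho>!j") (auto simp: cong_def)
  qed
  have c2: "[(\<Sum>l<d. U!(r+l) * (\<Sum>i<n. v \<rho> l i * ((p-1) * ba i + 1))) = (\<Sum>l<d. U!(r+l) * dotz n (v \<rho> l) a)] (mod p)"
    unfolding dotz_def
  proof (rule cong_sum, rule cong_mult, rule cong_refl, rule cong_sum, rule cong_mult, rule cong_refl)
    fix i
    show "[(p-1) * ba i + 1 = zv a i] (mod p)"
      using p unfolding ba_def zv_def by (cases "a!i") (auto simp: cong_def)
  qed
  have "(\<Sum>i<length (a@b). gw p n r d v \<rho> U i * (if (a@b)!i then 1 else 0)) + gC n r d v \<rho> U
     = (\<Sum>j<r. U!j * (cc j * bb j + (if \<rho>!j then 1 else 0))) + (\<Sum>l<d. U!(r+l) * (\<Sum>i<n. v \<rho> l i * ((p-1) * ba i + 1)))"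
    unfolding S gC_def using A B by linarith
  thus ?thesis unfolding T using cong_add[OF c1 c2] by simp
qed



definition gate :: "nat \<Rightarrow> nat \<Rightarrow> nat \<Rightarrow> nat \<Rightarrow> (bool list \<Rightarrow> nat \<Rightarrow> nat \<Rightarrow> nat) \<Rightarrow> bool list \<Rightarrow> nat list \<Rightarrow> (nat \<Rightarrow> nat) \<times> nat set" where
  "gate p n r d v \<rho> U = (gw p n r d v \<rho> U, {s. (s + gC n r d v \<rho> U) mod p = 1})"

definition mycirc :: "nat \<Rightarrow> nat \<Rightarrow> nat \<Rightarrow> nat \<Rightarrow> nat \<Rightarrow> (bool list \<Rightarrow> nat \<Rightarrow> nat \<Rightarrow> nat) \<Rightarrow> circ2" where
  "mycirc p q n r d v = Circ2
     (concat (map (\<lambda>\<rho>. map (\<lambda>U. gate p n r d v \<rho> U) (List.n_lists (r+d) [0..<p])) (List.n_lists r [False,True])))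
     (\<lambda>_. 0) (\<lambda>_. 1) {(p^(r+d-1) * (2^r - 1)) mod q}"

lemma gate_val:
  fixes p :: nat
  assumes p: "p \<ge> 1" and la: "length a = n" and lb: "length b = r"
  shows "mod_gate p (gw p n r d v \<rho> U) {s. (s + gC n r d v \<rho> U) mod p = 1} (a@b)
     \<longleftrightarrow> (0 + (\<Sum>j<r+d. U!j * gvec n r v \<rho> a b j)) mod p = 1"
  using gate_cong[OF p la lb, of d v \<rho> U] unfolding mod_gate_def cong_def
  by (simp add: mod_add_left_eq)

lemma gvec_nz:
  fixes p :: nat
  assumes p: "p \<ge> 2" and lb: "length b = r" and lr: "length \<rho> = r"
  shows "(\<exists>j<r+d. gvec n r v \<rho> a b j mod p \<noteq> 0) \<longleftrightarrow> (b \<noteq> \<rho> \<or> (\<exists>l<d. dotz n (v \<rho> l) a mod p \<noteq> 0))"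
proof
  assume "\<exists>j<r+d. gvec n r v \<rho> a b j mod p \<noteq> 0"
  then obtain j where j: "j < r+d" "gvec n r v \<rho> a b j mod p \<noteq> 0" by blast
  show "b \<noteq> \<rho> \<or> (\<exists>l<d. dotz n (v \<rho> l) a mod p \<noteq> 0)"
  proof (cases "j < r")
    case True
    thus ?thesis using j unfolding gvec_def by (auto split: if_splits)
  next
    case False
    thus ?thesis using j unfolding gvec_def by (intro disjI2 exI[of _ "j - r"]) auto
  qed
next
  assume "b \<noteq> \<rho> \<or> (\<exists>l<d. dotz n (v \<rho> l) a mod p \<noteq> 0)"
  thus "\<exists>j<r+d. gvec n r v \<rho> a b j mod p \<noteq> 0"
  proof
    assume "b \<noteq> \<rho>"
    then obtain j where "j < r" "b!j \<noteq> \<rho>!j" using lb lr nth_equalityI[of b \<rho>] by auto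
    thus ?thesis using p unfolding gvec_def by (intro exI[of _ j]) auto
  next
    assume "\<exists>l<d. dotz n (v \<rho> l) a mod p \<noteq> 0"
    then obtain l where "l < d" "dotz n (v \<rho> l) a mod p \<noteq> 0" by blast
    thus ?thesis unfolding gvec_def by (intro exI[of _ "r + l"]) auto
  qed
qed

lemma sum_bool_card: "finite A \<Longrightarrow> (\<Sum>x\<in>A. (if P x then 1 else 0::nat)) = card {x\<in>A. P x}"
  by (simp add: sum.If_cases Int_def)

lemma inner_count:
  fixes p :: nat
  assumes p: "prime p" and la: "length a = n" and lb: "length b = r" and lr: "length \<rho> = r"
  shows "(\<Sum>U\<in>set (List.n_lists (r+d) [0..<p]). if mod_gate p (gw p n r d v \<rho> U) {s. (s + gC n r d v \<rho> U) mod p = 1} (a@b) then 1 else 0)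
     = (if b \<noteq> \<rho> \<or> (\<exists>l<d. dotz n (v \<rho> l) a mod p \<noteq> 0) then p^(r+d-1) else 0)"
proof -
  have p1: "p \<ge> 1" "p \<ge> 2" "1 < p" using prime_ge_2_nat[OF p] by auto
  have st: "set (List.n_lists (r+d) [0..<p]) = {U. length U = r+d \<and> set U \<subseteq> {..<p}}"
    by (auto simp: set_n_lists)
  have "(\<Sum>U\<in>set (List.n_lists (r+d) [0..<p]). if mod_gate p (gw p n r d v \<rho> U) {s. (s + gC n r d v \<rho> U) mod p = 1} (a@b) then 1 else 0)
     = card {U \<in> {U. length U = r+d \<and> set U \<subseteq> {..<p}}. mod_gate p (gw p n r d v \<rho> U) {s. (s + gC n r d v \<rho> U) mod p = 1} (a@b)}"
    unfolding st by (rule sum_bool_card[OF finite_Uset])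
  also have "{U \<in> {U. length U = r+d \<and> set U \<subseteq> {..<p}}. mod_gate p (gw p n r d v \<rho> U) {s. (s + gC n r d v \<rho> U) mod p = 1} (a@b)}
     = {U. length U = r+d \<and> set U \<subseteq> {..<p} \<and> (0 + (\<Sum>j<r+d. U!j * gvec n r v \<rho> a b j)) mod p = 1}"
    using gate_val[OF p1(1) la lb] by auto
  also have "card \<dots> = (if \<exists>j<r+d. gvec n r v \<rho> a b j mod p \<noteq> 0 then p^(r+d-1) else if 0 mod p = 1 then p^(r+d) else 0)"
    by (rule count_U[OF p p1(3)])
  also have "\<dots> = (if b \<noteq> \<rho> \<or> (\<exists>l<d. dotz n (v \<rho> l) a mod p \<noteq> 0) then p^(r+d-1) else 0)"
    unfolding gvec_nz[OF p1(2) lb lr, of d n v a] using p1 by simp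
  finally show ?thesis .
qed



lemma sum_list_concat': "sum_list (concat xss) = sum_list (map sum_list (xss::nat list list))"
  by (induct xss) simp_all

lemma eval_mycirc:
  fixes p q :: nat
  assumes p: "prime p" and q: "prime q" and pq: "p \<noteq> q" and la: "length a = n" and lb: "length b = r"
  shows "eval_circ2 p q (mycirc p q n r d v) (a@b) \<longleftrightarrow> \<not>(\<exists>l<d. dotz n (v b l) a mod p \<noteq> 0)"
proof -
  define Seeds where "Seeds = List.n_lists r [False,True]"
  define Us where "Us = List.n_lists (r+d) [0..<p]"
  define mg where "mg \<rho> U = mod_gate p (gw p n r d v \<rho> U) {s. (s + gC n r d v \<rho> U) mod p = 1} (a@b)" for \<rho> U
  define bi where "bi x = (if x then 1 else 0::nat)" for x
  define P where "P = p^(r+d-1)"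
  define D where "D \<rho> = (\<exists>l<d. dotz n (v \<rho> l) a mod p \<noteq> 0)" for \<rho>
  define g where "g = map (\<lambda>(w, A). mod_gate p w A (a@b)) (level1 (mycirc p q n r d v))"
  have g: "g = concat (map (\<lambda>\<rho>. map (\<lambda>U. mg \<rho> U) Us) Seeds)"
    unfolding g_def mycirc_def Seeds_def Us_def mg_def gate_def by (simp add: map_concat comp_def)
  have sumg: "(\<Sum>j<length g. out_gates (mycirc p q n r d v) j * (if g ! j then 1 else 0)) = sum_list (map bi g)"
    unfolding sum_list_sum_nth by (simp add: mycirc_def bi_def atLeast0LessThan)
  have "sum_list (map bi g) = sum_list (map (\<lambda>\<rho>. sum_list (map (\<lambda>U. bi (mg \<rho> U)) Us)) Seeds)"
    unfolding g map_concat sum_list_concat' by (simp add: comp_def)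
  also have "\<dots> = (\<Sum>\<rho>\<in>set Seeds. \<Sum>U\<in>set Us. bi (mg \<rho> U))"
    unfolding Seeds_def Us_def
    by (simp add: sum_list_distinct_conv_sum_set distinct_n_lists)
  also have "\<dots> = (\<Sum>\<rho>\<in>set Seeds. if b \<noteq> \<rho> \<or> D \<rho> then P else 0)"
  proof (rule sum.cong)
    fix \<rho> assume "\<rho> \<in> set Seeds"
    hence lr: "length \<rho> = r" unfolding Seeds_def by (simp add: set_n_lists)
    show "(\<Sum>U\<in>set Us. bi (mg \<rho> U)) = (if b \<noteq> \<rho> \<or> D \<rho> then P else 0)"
      using inner_count[OF p la lb lr, of d v] unfolding Us_def bi_def mg_def P_def D_def .
  qed simp
  also have "\<dots> = (if D b then P else 0) + (2^r - 1) * P"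
  proof -
    have sS: "set Seeds = {\<rho>. length \<rho> = r}" unfolding Seeds_def by (auto simp: set_n_lists)
    have bS: "b \<in> set Seeds" using lb sS by simp
    have fin: "finite (set Seeds)" by simp
    have "(\<Sum>\<rho>\<in>set Seeds. if b \<noteq> \<rho> \<or> D \<rho> then P else 0)
       = (if b \<noteq> b \<or> D b then P else 0) + (\<Sum>\<rho>\<in>set Seeds - {b}. if b \<noteq> \<rho> \<or> D \<rho> then P else 0)"
      by (rule sum.remove[OF fin bS])
    also have "(\<Sum>\<rho>\<in>set Seeds - {b}. if b \<noteq> \<rho> \<or> D \<rho> then P else 0) = (\<Sum>\<rho>\<in>set Seeds - {b}. P)"
      by (rule sum.cong) auto
    also have "\<dots> = (2^r - 1) * P" using bS fin sS card_bool_lists[of r] by (simp add: card_Diff_singleton)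
    finally show ?thesis by simp
  qed
  finally have tot: "sum_list (map bi g) = (if D b then P else 0) + (2^r - 1) * P" .
  have nq: "\<not> q dvd P"
  proof
    assume "q dvd P"
    hence "q dvd p" unfolding P_def using prime_dvd_power[OF q] by blast
    hence "q = p" using primes_dvd_imp_eq[OF q p] by blast
    with pq show False by simp
  qed
  have "eval_circ2 p q (mycirc p q n r d v) (a@b) \<longleftrightarrow> ((if D b then P else 0) + (2^r - 1) * P) mod q = (P * (2^r - 1)) mod q"
    unfolding eval_circ2_def Let_def g_def[symmetric] sumg tot by (simp add: mycirc_def P_def)
  also have "\<dots> \<longleftrightarrow> \<not> D b"
  proof (cases "D b")
    case True
    have "\<not> [P + (2^r - 1) * P = 0 + (2^r - 1) * P] (mod q)"
      using nq by (simp only: cong_add_rcancel_nat) (simp add: cong_0_iff)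
    thus ?thesis using True by (simp add: cong_def mult.commute)
  qed (simp add: mult.commute)
  finally show ?thesis unfolding D_def .
qed



lemma size_mycirc: "size_circ2 (mycirc p q n r d v) = 2^r * p^(r+d) + 1"
  unfolding size_circ2_def mycirc_def
  by (simp add: length_concat comp_def length_n_lists sum_list_triv numeral_2_eq_2)

lemma choose_r:
  fixes n :: nat assumes n: "n \<ge> 2"
  obtains r where "n \<le> 2^r" "2^r \<le> 2*n" "real r \<le> (2 / ln 2) * ln (real n)"
proof -
  have ex: "\<exists>r. n \<le> 2^r" by (intro exI[of _ n]) (simp add: less_imp_le)
  define r where "r = (LEAST r. n \<le> 2^r)"
  have r1: "n \<le> 2^r" unfolding r_def using LeastI_ex[OF ex] .
  have r0: "r \<noteq> 0"
  proof
    assume "r = 0" with r1 n show False by simp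
  qed
  have r2: "\<not> n \<le> 2^(r-1)" unfolding r_def by (rule not_less_Least) (use r0 in \<open>simp add: r_def\<close>)
  have "(2::nat)^r = 2 * 2^(r-1)" using r0 by (metis Suc_pred' neq0_conv power_Suc)
  hence r3: "2^r \<le> 2*n" using r2 by linarith
  have "real (2^(r-1)) < real n" using r2 by simp
  hence "ln (real (2^(r-1))) < ln (real n)" by (subst ln_less_cancel_iff) auto
  hence "real (r-1) * ln 2 < ln (real n)" by (simp add: ln_realpow)
  moreover have "ln 2 \<le> ln (real n)" using n by (subst ln_le_cancel_iff) auto
  moreover have "real (r-1) = real r - 1" using r0 by simp
  ultimately have "real r * ln 2 < 2 * ln (real n)" by (simp add: algebra_simps)
  hence "real r \<le> (2 / ln 2) * ln (real n)" by (simp add: field_simps)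
  thus ?thesis using r1 r3 that by blast
qed

lemma part2:
  fixes p q :: nat
  assumes p: "prime p" and q: "prime q" and pq: "p \<noteq> q"
  shows "\<exists>c k :: real. \<forall>n::nat. n \<ge> 2 \<longrightarrow>
              (\<exists>r C. real (size_circ2 C) \<le> k * real n powr c \<and> real r \<le> k * ln (real n) \<and>
                 is_CCpq (n + r) C \<and> prob_realizes (eval_circ2 p q C) n r AND_fun)"
proof -
  have p2: "p \<ge> 2" using prime_ge_2_nat[OF p] .
  define K :: nat where "K = 2^(p+1) * p^6 + 1"
  define k :: real where "k = real K + 2 / ln 2"
  have lnpos: "ln (2::real) > 0" by simp
  show ?thesis
  proof (rule exI[of _ "real (p+1)"], rule exI[of _ k], intro allI impI)
    fix n :: nat assume n: "n \<ge> 2"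
    obtain r where r: "n \<le> 2^r" "2^r \<le> 2*n" "real r \<le> (2 / ln 2) * ln (real n)"
      using choose_r[OF n] by blast
    obtain F where F: "\<forall>a. length a = n \<and> \<not>(\<forall>i<n. a!i) \<longrightarrow>
     3 * card {\<rho>::bool list. length \<rho> = r \<and> (\<forall>l::nat<6. dotz n (F (\<rho>,l)) a mod p = 0)} \<le> 2^r"
      using family_exists[OF p2 r(1), of 6] by auto
    define v where "v \<rho> l i = F (\<rho>,l) i" for \<rho> l i
    define C where "C = mycirc p q n r 6 v"
    have lnn: "ln (real n) \<ge> 0" using n by simp
    have npos: "real n > 0" using n by simp
    have "p^r \<le> (2^r)^p"
    proof -
      have "p < 2^p" by simp
      hence "p^r \<le> (2^p)^r" by (intro power_mono) auto
      thus ?thesis by (simp add: power_mult[symmetric] mult.commute)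
    qed
    hence "2^r * p^(r+6) \<le> 2^r * (2^r)^p * p^6" by (simp add: power_add)
    also have "\<dots> = (2^r)^(p+1) * p^6" by (simp add: power_add mult.commute)
    also have "\<dots> \<le> (2*n)^(p+1) * p^6" using r(2) by (intro mult_right_mono power_mono) auto
    also have "\<dots> = 2^(p+1) * p^6 * n^(p+1)" by (simp add: power_mult_distrib)
    finally have "size_circ2 C \<le> 2^(p+1) * p^6 * n^(p+1) + 1" unfolding C_def size_mycirc by simp
    also have "\<dots> \<le> K * n^(p+1)" unfolding K_def using n by (simp add: algebra_simps)
    finally have "real (size_circ2 C) \<le> real (K * n^(p+1))" by (simp only: of_nat_le_iff)
    also have "\<dots> = real K * real n ^ (p+1)" by simp
    also have "\<dots> = real K * real n powr real (p+1)" by (subst powr_realpow[OF npos]) (rule refl)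
    also have "\<dots> \<le> k * real n powr real (p+1)" unfolding k_def using lnpos
      by (intro mult_right_mono) auto
    finally have sz: "real (size_circ2 C) \<le> k * real n powr real (p+1)" .
    have rb: "real r \<le> k * ln (real n)"
    proof -
      have "(2 / ln 2) * ln (real n) \<le> k * ln (real n)" unfolding k_def using lnn
        by (intro mult_right_mono) auto
      thus ?thesis using r(3) by linarith
    qed
    have cc: "is_CCpq (n + r) C" unfolding C_def is_CCpq_def mycirc_def by simp
    have pr: "prob_realizes (eval_circ2 p q C) n r AND_fun"
      unfolding prob_realizes_def
    proof (intro allI impI)
      fix a :: "bool list" assume la: "length a = n"
      have ev: "eval_circ2 p q C (a@b) \<longleftrightarrow> (\<forall>l<6. dotz n (F (b,l)) a mod p = 0)" if "length b = r" for b
        using eval_mycirc[OF p q pq la that, of 6 v] unfolding C_def v_def by auto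
      show "2 * 2^r \<le> 3 * card {b. length b = r \<and> eval_circ2 p q C (a @ b) = AND_fun a}"
      proof (cases "\<forall>i<n. a!i")
        case True
        have "dotz n (F (b,l)) a = 0" for b l unfolding dotz_def zv_def using True by simp
        hence "{b. length b = r \<and> eval_circ2 p q C (a @ b) = AND_fun a} = {b. length b = r}"
          using ev True la unfolding AND_fun_def by auto
        thus ?thesis using card_bool_lists[of r] by simp
      next
        case False
        have e: "{b. length b = r \<and> eval_circ2 p q C (a @ b) = AND_fun a}
            = {b. length b = r} - {\<rho>::bool list. length \<rho> = r \<and> (\<forall>l<6. dotz n (F (\<rho>,l)) a mod p = 0)}"
          using ev False la unfolding AND_fun_def by auto
        have "card {b. length b = r \<and> eval_circ2 p q C (a @ b) = AND_fun a}
            = 2^r - card {\<rho>::bool list. length \<rho> = r \<and> (\<forall>l<6. dotz n (F (\<rho>,l)) a mod p = 0)}"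
          unfolding e by (subst card_Diff_subset) (auto simp: card_bool_lists intro: finite_subset[OF _ finite_bool_lists[of r]])
        moreover have "3 * card {\<rho>::bool list. length \<rho> = r \<and> (\<forall>l<6. dotz n (F (\<rho>,l)) a mod p = 0)} \<le> 2^r"
          using F la False by blast
        ultimately show ?thesis by linarith
      qed
    qed
    show "\<exists>r C. real (size_circ2 C) \<le> k * real n powr real (p+1) \<and> real r \<le> k * ln (real n) \<and>
                 is_CCpq (n + r) C \<and> prob_realizes (eval_circ2 p q C) n r AND_fun"
      using sz rb cc pr by blast
  qed
qed



definition scale_circ :: "nat \<Rightarrow> nat \<Rightarrow> circ2 \<Rightarrow> circ2" where
  "scale_circ k1 k2 C = Circ2 (map (\<lambda>(w, A). (\<lambda>i. k1 * w i, (\<lambda>s. k1 * s) ` A)) (level1 C))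
     (\<lambda>i. k2 * out_in C i) (\<lambda>j. k2 * out_gates C j) ((\<lambda>s. k2 * s) ` out_acc C)"

lemma img_mem: "(k::nat) > 0 \<Longrightarrow> k * x \<in> (\<lambda>s. k * s) ` A \<longleftrightarrow> x \<in> A"
  by auto

lemma scale_gate:
  assumes "k1 > 0"
  shows "mod_gate (k1 * p) (\<lambda>i. k1 * w i) ((\<lambda>s. k1 * s) ` A) xs = mod_gate p w A xs"
proof -
  have "(\<Sum>i<length xs. k1 * w i * (if xs ! i then 1 else 0)) = k1 * (\<Sum>i<length xs. w i * (if xs ! i then 1 else 0))"
    by (simp add: sum_distrib_left mult.assoc)
  thus ?thesis unfolding mod_gate_def using assms by (simp add: mod_mult_mult1 img_mem)
qed

lemma scale_eval:
  assumes k1: "k1 > 0" and k2: "k2 > 0" and m1: "m = k1 * p" and m2: "m = k2 * q"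
  shows "eval_CC2 m (scale_circ k1 k2 C) xs = eval_circ2 p q C xs"
proof -
  have g: "map (\<lambda>(w, A). mod_gate m w A xs) (level1 (scale_circ k1 k2 C))
      = map (\<lambda>(w, A). mod_gate p w A xs) (level1 C)"
    unfolding scale_circ_def using scale_gate[OF k1] m1 by (auto simp: case_prod_beta)
  define g0 where "g0 = map (\<lambda>(w, A). mod_gate p w A xs) (level1 C)"
  have "(\<Sum>i<length xs. k2 * out_in C i * (if xs ! i then 1 else 0)) + (\<Sum>j<length g0. k2 * out_gates C j * (if g0 ! j then 1 else 0))
     = k2 * ((\<Sum>i<length xs. out_in C i * (if xs ! i then 1 else 0)) + (\<Sum>j<length g0. out_gates C j * (if g0 ! j then 1 else 0)))"
    by (simp add: sum_distrib_left mult.assoc distrib_left)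
  thus ?thesis unfolding eval_CC2_def eval_circ2_def Let_def g g0_def[symmetric]
    using k2 m2 by (simp add: scale_circ_def mod_mult_mult1 img_mem)
qed

lemma size_scale: "size_circ2 (scale_circ k1 k2 C) = size_circ2 C"
  unfolding size_circ2_def scale_circ_def by simp

theorem theorem1p3:
  shows "(\<forall>m::nat. m \<ge> 1 \<and> omega m \<ge> 2 \<longrightarrow>
           (\<exists>c k :: real. \<forall>n::nat. n \<ge> 2 \<longrightarrow>
              (\<exists>r C. real (size_circ2 C) \<le> k * real n powr c \<and> real r \<le> k * ln (real n) \<and>
                 prob_realizes (eval_CC2 m C) n r AND_fun)))
       \<and> (\<forall>p q::nat. prime p \<and> prime q \<and> p \<noteq> q \<longrightarrow>
           (\<exists>c k :: real. \<forall>n::nat. n \<ge> 2 \<longrightarrow>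
              (\<exists>r C. real (size_circ2 C) \<le> k * real n powr c \<and> real r \<le> k * ln (real n) \<and>
                 is_CCpq (n + r) C \<and> prob_realizes (eval_circ2 p q C) n r AND_fun)))"
proof (intro conjI allI impI)
  fix p q :: nat assume "prime p \<and> prime q \<and> p \<noteq> q"
  thus "\<exists>c k :: real. \<forall>n::nat. n \<ge> 2 \<longrightarrow>
              (\<exists>r C. real (size_circ2 C) \<le> k * real n powr c \<and> real r \<le> k * ln (real n) \<and>
                 is_CCpq (n + r) C \<and> prob_realizes (eval_circ2 p q C) n r AND_fun)"
    using part2 by blast
next
  fix m :: nat assume m: "m \<ge> 1 \<and> omega m \<ge> 2"
  hence "2 \<le> card (prime_factors m)" unfolding omega_def by simp
  then obtain T where T: "T \<subseteq> prime_factors m" "card T = 2" by (meson obtain_subset_with_card_n)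
  then obtain p q where pq: "T = {p, q}" "p \<noteq> q" by (auto simp: card_2_iff)
  have pf: "p \<in> prime_factors m" "q \<in> prime_factors m" using T pq by auto
  hence pr: "prime p" "prime q" "p dvd m" "q dvd m" by (auto simp: in_prime_factors_iff)
  obtain k1 where k1: "m = p * k1" using pr(3) by blast
  obtain k2 where k2: "m = q * k2" using pr(4) by blast
  have k1p: "k1 > 0" using k1 m by (cases k1) auto
  have k2p: "k2 > 0" using k2 m by (cases k2) auto
  obtain c k :: real where ck: "\<forall>n::nat. n \<ge> 2 \<longrightarrow>
              (\<exists>r C. real (size_circ2 C) \<le> k * real n powr c \<and> real r \<le> k * ln (real n) \<and>
                 is_CCpq (n + r) C \<and> prob_realizes (eval_circ2 p q C) n r AND_fun)"
    using part2[OF pr(1,2) pq(2)] by blast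
  show "\<exists>c k :: real. \<forall>n::nat. n \<ge> 2 \<longrightarrow>
              (\<exists>r C. real (size_circ2 C) \<le> k * real n powr c \<and> real r \<le> k * ln (real n) \<and>
                 prob_realizes (eval_CC2 m C) n r AND_fun)"
  proof (rule exI[of _ c], rule exI[of _ k], intro allI impI)
    fix n :: nat assume "n \<ge> 2"
    then obtain r C where rC: "real (size_circ2 C) \<le> k * real n powr c" "real r \<le> k * ln (real n)"
      "prob_realizes (eval_circ2 p q C) n r AND_fun" using ck by blast
    have "eval_CC2 m (scale_circ k1 k2 C) = eval_circ2 p q C"
      using scale_eval[OF k1p k2p, of m p q C] k1 k2 by (auto simp: mult.commute)
    thus "\<exists>r C. real (size_circ2 C) \<le> k * real n powr c \<and> real r \<le> k * ln (real n) \<and>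
                 prob_realizes (eval_CC2 m C) n r AND_fun"
      using rC size_scale[of k1 k2 C] by (intro exI[of _ r] exI[of _ "scale_circ k1 k2 C"]) auto
  qed
qed

end
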